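(* Let $p$ be a prime and $l \ge 1$ an integer with $l \mid (p-1)$, and set $q = pl$. For $\Delta \in Z_q$ let $\omega_\Delta : Z_q \to Z_q$, $u \mapsto (u+\Delta) \bmod q$. Then $$ P = \{\omega_{1+il} : i \in \{0,1,\ldots,p-1\},\ i \neq (p-1)/l\} $$ consists of $p-1$ distinct cyclic permutations of $Z_q$ with orbit $Z_q$, $P$ is a $(pl,l)$-proper set, and $|P| = p-1 = \lfloor (pl-1)/l \rfloor$, i.e. $P$ attains the upper bound $|P| \le \lfloor (q-1)/l \rfloor$ valid for every $(q,l)$-proper set (so $P$ is quasiperfect).
   Context: Let $Z_q = \{0,1,\ldots,q-1\}$. A permutation $\sigma$ of $Z_q$ is called cyclic with orbit $Z_q$ if it consists of a single cycle containing all $q$ elements. For a permutation $\sigma$, $\sigma^\beta$ denotes its $\beta$-fold composition with itself. A set $P$ of cyclic permutations of $Z_q$ with orbit $Z_q$ is called $(q,l)$-proper (for an integer $l$ with $1 \le l < q$) if for every ordered pair $(u,v) \in Z_q^2$ there is at most one $\sigma \in P$ such that $v = \sigma^\beta[u]$ for some $\beta \in \{1,\ldots,l\}$. A $(q,l)$-proper set is called quasiperfect if $|P| = \lfloor (q-1)/l \rfloor$. *)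

theory Defs
  imports "HOL-Combinatorics.Permutations" "HOL-Computational_Algebra.Primes"
begin

text \<open>Z_q is represented as the set {0..<q} of naturals. A permutation of Z_q is a
function nat => nat that permutes {0..<q} (and fixes everything outside).\<close>

definition cyclic_perm :: "nat \<Rightarrow> (nat \<Rightarrow> nat) \<Rightarrow> bool" where
  "cyclic_perm q \<sigma> \<longleftrightarrow> \<sigma> permutes {0..<q} \<and>
     (\<forall>u<q. \<forall>v<q. \<exists>k::nat. (\<sigma> ^^ k) u = v)"

definition proper_set :: "nat \<Rightarrow> nat \<Rightarrow> (nat \<Rightarrow> nat) set \<Rightarrow> bool" where
  "proper_set q l P \<longleftrightarrow> 1 \<le> l \<and> l < q \<and> (\<forall>\<sigma>\<in>P. cyclic_perm q \<sigma>) \<and>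
     (\<forall>u<q. \<forall>v<q. \<forall>\<sigma>\<in>P. \<forall>\<tau>\<in>P.
        (\<exists>\<beta>\<in>{1..l}. (\<sigma> ^^ \<beta>) u = v) \<longrightarrow> (\<exists>\<beta>\<in>{1..l}. (\<tau> ^^ \<beta>) u = v) \<longrightarrow> \<sigma> = \<tau>)"

definition quasiperfect :: "nat \<Rightarrow> nat \<Rightarrow> (nat \<Rightarrow> nat) set \<Rightarrow> bool" where
  "quasiperfect q l P \<longleftrightarrow> proper_set q l P \<and> card P = (q - 1) div l"

definition omega :: "nat \<Rightarrow> nat \<Rightarrow> nat \<Rightarrow> nat" where
  "omega q \<Delta> u = (if u < q then (u + \<Delta>) mod q else u)"

end

theory Submission
  imports Defs "HOL-Number_Theory.Number_Theory"
begin

lemma cyc_distinct: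
  assumes c: "cyclic_perm q \<sigma>" and ab: "a < b" "b < q"
  shows "(\<sigma> ^^ a) 0 \<noteq> (\<sigma> ^^ b) 0"
proof
  assume eq: "(\<sigma> ^^ a) 0 = (\<sigma> ^^ b) 0"
  define d where "d = b - a"
  have dpos: "0 < d" and dq: "d < q" using ab by (auto simp: d_def)
  have perm: "\<sigma> permutes {0..<q}" using c by (simp add: cyclic_perm_def)
  have inj: "inj (\<sigma> ^^ a)" using permutes_inj[OF perm] by simp
  have "(\<sigma> ^^ a) ((\<sigma> ^^ d) 0) = (\<sigma> ^^ a) 0"
    using eq by (simp add: d_def funpow_add[symmetric] ab(1) less_imp_le_nat
       flip: funpow_add comp_apply[of "\<sigma>^^a" "\<sigma>^^(b-a)"])
  hence d0: "(\<sigma> ^^ d) 0 = 0" using inj by (simp add: inj_eq)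
  have "{0..<q} \<subseteq> (\<lambda>k. (\<sigma> ^^ k) 0) ` {0..<d}"
  proof
    fix v assume "v \<in> {0..<q}"
    then obtain k where "(\<sigma> ^^ k) 0 = v" using c dq unfolding cyclic_perm_def by auto
    hence "(\<sigma> ^^ (k mod d)) 0 = v" using funpow_mod_eq[OF d0] by simp
    thus "v \<in> (\<lambda>k. (\<sigma> ^^ k) 0) ` {0..<d}" using dpos by force
  qed
  hence "card {0..<q} \<le> card ((\<lambda>k. (\<sigma> ^^ k) 0) ` {0..<d})" by (intro card_mono) auto
  also have "\<dots> \<le> d" using card_image_le[of "{0..<d}"] by simp
  finally show False using dq by simp
qed

lemma upper_bound:
  assumes pr: "proper_set q l Q"
  shows "card Q \<le> (q - 1) div l"
proof -
  have l1: "1 \<le> l" and lq: "l < q" and cyc: "\<forall>\<sigma>\<in>Q. cyclic_perm q \<sigma>"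
    and disj: "\<forall>u<q. \<forall>v<q. \<forall>\<sigma>\<in>Q. \<forall>\<tau>\<in>Q.
        (\<exists>\<beta>\<in>{1..l}. (\<sigma> ^^ \<beta>) u = v) \<longrightarrow> (\<exists>\<beta>\<in>{1..l}. (\<tau> ^^ \<beta>) u = v) \<longrightarrow> \<sigma> = \<tau>"
    using pr by (auto simp: proper_set_def)
  have fin: "finite Q"
    by (rule finite_subset[OF _ finite_permutations[of "{0..<q}"]]) (use cyc in \<open>auto simp: cyclic_perm_def\<close>)
  define S where "S \<sigma> = (\<lambda>\<beta>. (\<sigma> ^^ \<beta>) 0) ` {1..l}" for \<sigma> :: "nat \<Rightarrow> nat"
  have cardS: "card (S \<sigma>) = l" if "\<sigma> \<in> Q" for \<sigma>
  proof -
    have "inj_on (\<lambda>\<beta>. (\<sigma> ^^ \<beta>) 0) {1..l}"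
    proof (rule inj_onI)
      fix a b assume a: "a \<in> {1..l}" and b: "b \<in> {1..l}" and e: "(\<sigma> ^^ a) 0 = (\<sigma> ^^ b) 0"
      show "a = b"
      proof (rule ccontr)
        assume "a \<noteq> b"
        then consider "a < b" | "b < a" by linarith
        thus False
          using cyc_distinct[of q \<sigma> a b] cyc_distinct[of q \<sigma> b a] cyc that a b e lq by (cases; auto)
      qed
    qed
    thus ?thesis unfolding S_def by (simp add: card_image)
  qed
  have sub: "S \<sigma> \<subseteq> {1..<q}" if "\<sigma> \<in> Q" for \<sigma>
  proof
    fix x assume "x \<in> S \<sigma>"
    then obtain \<beta> where \<beta>: "\<beta> \<in> {1..l}" "x = (\<sigma> ^^ \<beta>) 0" unfolding S_def by auto
    have perm: "\<sigma> permutes {0..<q}" using cyc that by (simp add: cyclic_perm_def)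
    have "(\<sigma> ^^ n) 0 < q" for n
      by (induction n) (use lq perm permutes_in_image[OF perm] in auto)
    hence "x < q" using \<beta> by auto
    moreover have "x \<noteq> 0"
      using cyc_distinct[of q \<sigma> 0 \<beta>] cyc that \<beta> lq by auto
    ultimately show "x \<in> {1..<q}" by auto
  qed
  have pd: "\<forall>\<sigma>\<in>Q. \<forall>\<tau>\<in>Q. \<sigma> \<noteq> \<tau> \<longrightarrow> S \<sigma> \<inter> S \<tau> = {}"
  proof (intro ballI impI)
    fix \<sigma> \<tau> assume s: "\<sigma> \<in> Q" and t: "\<tau> \<in> Q" and ne: "\<sigma> \<noteq> \<tau>"
    show "S \<sigma> \<inter> S \<tau> = {}"
    proof (rule ccontr)
      assume "S \<sigma> \<inter> S \<tau> \<noteq> {}"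
      then obtain x where x1: "x \<in> S \<sigma>" and x2: "x \<in> S \<tau>" by auto
      have "x < q" using sub[OF s] x1 by auto
      then show False using disj x1 x2 s t ne lq unfolding S_def by fastforce
    qed
  qed
  have "card (\<Union>(S ` Q)) = (\<Sum>\<sigma>\<in>Q. card (S \<sigma>))"
    by (rule card_UN_disjoint[OF fin]) (use pd in \<open>auto simp: S_def\<close>)
  also have "\<dots> = card Q * l" using cardS by simp
  finally have e: "card (\<Union>(S ` Q)) = card Q * l" .
  have "card (\<Union>(S ` Q)) \<le> card {1..<q}" by (rule card_mono) (use sub in auto)
  hence "card Q * l \<le> q - 1" using e by simp
  thus ?thesis using l1 by (metis div_le_mono nonzero_mult_div_cancel_right not_one_le_zero)
qed

lemma omega_pow:
  assumes "u < q"
  shows "(omega q D ^^ k) u = (u + k * D) mod q"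
proof (induction k)
  case 0 then show ?case using assms by simp
next
  case (Suc k)
  have "(u + k * D) mod q < q" using assms by simp
  then show ?case using Suc by (simp add: omega_def mod_add_right_eq algebra_simps)
qed

lemma omega_cyclic:
  assumes q: "0 < q" and cop: "coprime D q"
  shows "cyclic_perm q (omega q D)"
proof -
  have inj: "inj_on (omega q D) {0..<q}"
  proof (rule inj_onI)
    fix u v assume u: "u \<in> {0..<q}" and v: "v \<in> {0..<q}" and e: "omega q D u = omega q D v"
    hence "[u + D = v + D] (mod q)" by (simp add: omega_def cong_def)
    hence "[u = v] (mod q)" by (simp add: cong_add_rcancel_nat)
    thus "u = v" using u v by (simp add: cong_def)
  qed
  have img: "omega q D ` {0..<q} \<subseteq> {0..<q}" using q by (auto simp: omega_def)
  have bij: "bij_betw (omega q D) {0..<q} {0..<q}"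
    using endo_inj_surj[OF _ img inj] inj by (simp add: bij_betw_def)
  have perm: "omega q D permutes {0..<q}"
    by (rule bij_imp_permutes[OF bij]) (simp add: omega_def)
  obtain x where x: "[D * x = Suc 0] (mod q)" using cong_solve_coprime_nat[OF cop] by blast
  have "\<exists>k. (omega q D ^^ k) u = v" if u: "u < q" and v: "v < q" for u v
  proof
    let ?k = "x * (v + q - u)"
    have "[u + ?k * D = u + (v + q - u) * (D * x)] (mod q)"
      by (simp add: algebra_simps)
    also have "[u + (v + q - u) * (D * x) = u + (v + q - u) * 1] (mod q)"
      using x by (intro cong_add cong_mult) auto
    also have "u + (v + q - u) * 1 = v + q" using u by simp
    also have "[v + q = v] (mod q)" by (simp add: cong_def)
    finally show "(omega q D ^^ ?k) u = v" using omega_pow[OF u] v by (simp add: cong_def)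
  qed
  thus ?thesis using perm by (simp add: cyclic_perm_def)
qed

lemma small_dvd_zero:
  fixes x :: int
  assumes "n dvd x" "\<bar>x\<bar> < n"
  shows "x = 0"
proof (rule ccontr)
  assume "x \<noteq> 0"
  hence "\<bar>n\<bar> \<le> \<bar>x\<bar>" using dvd_imp_le_int assms(1) by blast
  thus False using assms(2) by linarith
qed

theorem theorem2:
  fixes p l q :: nat and P :: "(nat \<Rightarrow> nat) set"
  assumes "prime p" and "1 \<le> l" and "l dvd (p - 1)" and "q = p * l"
    and "P = (\<lambda>i. omega q (1 + i * l)) ` ({0..<p} - {(p - 1) div l})"
  shows "inj_on (\<lambda>i. omega q (1 + i * l)) ({0..<p} - {(p - 1) div l})
    \<and> (\<forall>\<sigma>\<in>P. cyclic_perm q \<sigma>)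
    \<and> proper_set q l P
    \<and> card P = p - 1
    \<and> p - 1 = (p * l - 1) div l
    \<and> (\<forall>Q. proper_set q l Q \<longrightarrow> card Q \<le> (q - 1) div l)
    \<and> quasiperfect q l P"
proof -
  note pr = assms(1) and l1 = assms(2) and ldvd = assms(3) and qdef = assms(4) and Pdef = assms(5)
  define m where "m = (p - 1) div l"
  define I where "I = {0..<p} - {m}"
  have p2: "2 \<le> p" using prime_ge_2_nat[OF pr] .
  have ml: "m * l = p - 1" using ldvd by (simp add: m_def)
  have lp: "l < p" using ldvd p2 dvd_imp_le[OF ldvd] by linarith
  have mp: "m < p"
  proof -
    have "m \<le> m * l" using l1 by simp
    thus ?thesis using ml p2 by linarith
  qed
  have Dlt: "1 + i * l < q" if "i \<in> I" for i
  proof (cases "l = 1")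
    case True
    then have "m = p - 1" using ml by simp
    then have "i < p - 1" using that by (auto simp: I_def)
    then show ?thesis using True qdef by simp
  next
    case False
    then have "l \<ge> 2" using l1 by simp
    have "i \<le> p - 1" using that by (auto simp: I_def)
    hence "i * l \<le> (p - 1) * l" by simp
    also have "\<dots> = p * l - l" by (simp add: algebra_simps)
    finally have "i * l \<le> p * l - l" .
    moreover have "l \<le> p * l" using p2 by simp
    ultimately show ?thesis using \<open>l \<ge> 2\<close> qdef by linarith
  qed
  have pint: "prime (int p)" using pr by simp
  have notdvd: "\<not> p dvd (1 + i * l)" if "i \<in> I" for i
  proof
    assume "p dvd (1 + i * l)"
    hence h1: "int p dvd int (1 + i * l)" using int_dvd_int_iff by blast
    have "1 + m * l = p" using ml p2 by simp
    hence "int p dvd int (1 + i * l) - int (1 + m * l)" using h1 by simp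
    hence "int p dvd (int i - int m) * int l" by (simp add: algebra_simps)
    hence "int p dvd (int i - int m) \<or> int p dvd int l" using pint prime_dvd_mult_iff by blast
    moreover have "\<not> int p dvd int l" using lp l1 by (simp add: nat_dvd_not_less)
    moreover have "\<bar>int i - int m\<bar> < int p" using that mp by (auto simp: I_def)
    ultimately have "int i - int m = 0" using small_dvd_zero by blast
    thus False using that by (auto simp: I_def)
  qed
  have cop: "coprime (1 + i * l) q" if "i \<in> I" for i
  proof -
    have "gcd l (i * l + 1) = gcd l 1" by (rule gcd_add_mult)
    hence "gcd l (1 + i * l) = 1" by (simp add: add.commute)
    hence "coprime l (1 + i * l)" by (simp only: coprime_iff_gcd_eq_1)
    hence c1: "coprime (1 + i * l) l" by (rule coprime_commute[THEN iffD1])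
    have "coprime p (1 + i * l)" using notdvd[OF that] pr by (rule_tac prime_imp_coprime) auto
    hence c2: "coprime (1 + i * l) p" by (rule coprime_commute[THEN iffD1])
    have "coprime (1 + i * l) (p * l)" using c1 c2 by (rule_tac coprime_mult_right_iff[THEN iffD2]) auto
    thus ?thesis using qdef by simp
  qed
  have q0: "0 < q" using qdef p2 l1 by simp
  have cyc: "cyclic_perm q (omega q (1 + i * l))" if "i \<in> I" for i
    using omega_cyclic[OF q0 cop[OF that]] .
  have inj: "inj_on (\<lambda>i. omega q (1 + i * l)) I"
  proof (rule inj_onI)
    fix i j assume i: "i \<in> I" and j: "j \<in> I" and e: "omega q (1 + i * l) = omega q (1 + j * l)"
    hence "omega q (1 + i * l) 0 = omega q (1 + j * l) 0" by simp
    hence "1 + i * l = 1 + j * l" using Dlt[OF i] Dlt[OF j] q0 by (simp add: omega_def)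
    thus "i = j" using l1 by simp
  qed
  have PI: "P = (\<lambda>i. omega q (1 + i * l)) ` I" using Pdef by (simp add: I_def m_def)
  have cycP: "\<forall>\<sigma>\<in>P. cyclic_perm q \<sigma>" using cyc PI by auto
  have cardI: "card I = p - 1" using mp by (simp add: I_def)
  have cardP: "card P = p - 1" using PI card_image[OF inj] cardI by simp
  have divp: "p - 1 = (p * l - 1) div l"
  proof -
    have "p * l - 1 = (p - 1) * l + (l - 1)" using l1 p2 by (simp add: algebra_simps)
    also have "\<dots> = (l - 1) + (p - 1) * l" by simp
    finally have e: "p * l - 1 = (l - 1) + (p - 1) * l" .
    have "((l - 1) + (p - 1) * l) div l = (p - 1) + (l - 1) div l"
      using l1 by (intro div_mult_self1) simp
    also have "(l - 1) div l = 0" using l1 by simp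
    finally show ?thesis using e by simp
  qed
  have proper: "proper_set q l P"
    unfolding proper_set_def
  proof (intro conjI allI impI ballI)
    show "1 \<le> l" by fact
    show "l < q" using qdef p2 l1 by simp
    show "\<And>\<sigma>. \<sigma> \<in> P \<Longrightarrow> cyclic_perm q \<sigma>" using cycP by blast
    fix u v \<sigma> \<tau>
    assume u: "u < q" and v: "v < q" and s: "\<sigma> \<in> P" and t: "\<tau> \<in> P"
      and bs: "\<exists>\<beta>\<in>{1..l}. (\<sigma> ^^ \<beta>) u = v" and bt: "\<exists>\<beta>\<in>{1..l}. (\<tau> ^^ \<beta>) u = v"
    obtain i where i: "i \<in> I" and si: "\<sigma> = omega q (1 + i * l)" using s PI by auto
    obtain j where j: "j \<in> I" and tj: "\<tau> = omega q (1 + j * l)" using t PI by auto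
    obtain b where b: "b \<in> {1..l}" "(\<sigma> ^^ b) u = v" using bs by blast
    obtain c where c: "c \<in> {1..l}" "(\<tau> ^^ c) u = v" using bt by blast
    have "(u + b * (1 + i * l)) mod q = (u + c * (1 + j * l)) mod q"
      using b c si tj omega_pow[OF u] by simp
    hence "[u + b * (1 + i * l) = u + c * (1 + j * l)] (mod q)" by (simp add: cong_def)
    hence "[b * (1 + i * l) = c * (1 + j * l)] (mod q)" by (simp add: cong_add_lcancel_nat)
    hence "[int (b * (1 + i * l)) = int (c * (1 + j * l))] (mod int q)" using cong_int_iff by blast
    hence qd: "int q dvd (int b - int c) + int l * (int b * int i - int c * int j)"
      by (simp add: cong_iff_dvd_diff algebra_simps dvd_diff_commute)
    have "int l dvd int q" using qdef by simp
    hence "int l dvd (int b - int c) + int l * (int b * int i - int c * int j)"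
      using qd dvd_trans by blast
    hence "int l dvd (int b - int c)" by (simp add: dvd_add_left_iff)
    moreover have "\<bar>int b - int c\<bar> < int l" using b c by auto
    ultimately have "int b - int c = 0" using small_dvd_zero by blast
    hence bc: "b = c" by simp
    hence "int q dvd int l * (int b * (int i - int j))" using qd by (simp add: algebra_simps)
    hence "int l * int p dvd int l * (int b * (int i - int j))" using qdef by (simp add: mult.commute)
    hence "int p dvd int b * (int i - int j)" using l1 by simp
    hence "int p dvd int b \<or> int p dvd (int i - int j)" using pint prime_dvd_mult_iff by blast
    moreover have "\<not> int p dvd int b" using b lp by (simp add: nat_dvd_not_less)
    moreover have "\<bar>int i - int j\<bar> < int p" using i j by (auto simp: I_def)
    ultimately have "int i - int j = 0" using small_dvd_zero by blast
    thus "\<sigma> = \<tau>" using si tj by simp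
  qed
  have ub: "\<forall>Q. proper_set q l Q \<longrightarrow> card Q \<le> (q - 1) div l" using upper_bound by blast
  have qp: "quasiperfect q l P" unfolding quasiperfect_def using proper cardP divp qdef by simp
  show ?thesis using inj cycP proper cardP divp ub qp by (simp add: I_def m_def)
qed

end
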